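(* Let $(X,d)$ be a nonempty metric space, let $F:X\rightarrow K(X)$ be a set-valued uniform pointwise contraction with modulus $\beta\in[0,1)$, and let $p:[0,1]\to X$ be a continuous path with $l(p)<\infty$. Then $l(F\circ p)\le\beta\, l(p)<\infty$, where $$l(F\circ p):=\sup_{\pi\in\Pi}\sum_{i=1}^n H(F(p(t_{i-1})),F(p(t_i))).$$
   Context: $\Pi$ is the set of finite partitions $0=t_0<t_1<\cdots<t_n=1$ of $[0,1]$. The length of a path $p$ is $l(p)=\sup_{\pi\in\Pi}\sum_{i=1}^n d(p(t_{i-1}),p(t_i))$. $K(X)$ is the set of nonempty compact subsets of $X$; $H$ is the Hausdorff distance $H(A,B)=\max\{\sup_{a\in A}\inf_{b\in B}d(a,b),\sup_{b\in B}\inf_{a\in A}d(a,b)\}$. $F$ is a set-valued uniform pointwise contraction with modulus $\beta$ if every $x\in X$ has an open neighborhood $N(x)$ with $H(F(x),F(y))\le\beta\, d(x,y)$ for all $y\in N(x)$. *)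

theory Defs
  imports "HOL-Analysis.Analysis"
begin

text \<open>Hausdorff distance, as in the paper (meaningful for nonempty compact sets).\<close>
definition hausdorff_dist :: "'a::metric_space set \<Rightarrow> 'a set \<Rightarrow> real" where
  "hausdorff_dist A B =
     max (SUP a\<in>A. INF b\<in>B. dist a b) (SUP b\<in>B. INF a\<in>A. dist a b)"

definition partitions01 :: "(nat \<times> (nat \<Rightarrow> real)) set" where
  "partitions01 = {(n, t). n \<ge> 1 \<and> t 0 = 0 \<and> t n = 1 \<and> (\<forall>i<n. t i < t (Suc i))}"

text \<open>Variation of p on [0,1] w.r.t. a distance-like function D, valued in ereal
  (so that infinite length is representable).\<close>
definition variation :: "('a \<Rightarrow> 'a \<Rightarrow> real) \<Rightarrow> (real \<Rightarrow> 'a) \<Rightarrow> ereal" where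
  "variation D p = (SUP nt\<in>partitions01.
      ereal (\<Sum>i\<in>{1..fst nt}. D (p (snd nt (i - 1))) (p (snd nt i))))"

definition path_length :: "(real \<Rightarrow> 'a::metric_space) \<Rightarrow> ereal" where
  "path_length p = variation dist p"

definition set_valued_path_length :: "('a::metric_space \<Rightarrow> 'a set) \<Rightarrow> (real \<Rightarrow> 'a) \<Rightarrow> ereal" where
  "set_valued_path_length F p = variation (\<lambda>x y. hausdorff_dist (F x) (F y)) p"

definition uniform_pointwise_contraction ::
  "('a::metric_space \<Rightarrow> 'a set) \<Rightarrow> real \<Rightarrow> bool" where
  "uniform_pointwise_contraction F \<beta> \<longleftrightarrow>
     (\<forall>x. \<exists>N. open N \<and> x \<in> N \<and>
        (\<forall>y\<in>N. hausdorff_dist (F x) (F y) \<le> \<beta> * dist x y))"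

end

theory Submission
  imports Defs
begin

fun sumL :: "('b \<Rightarrow> 'b \<Rightarrow> real) \<Rightarrow> 'b list \<Rightarrow> real" where
  "sumL f (x # y # zs) = f x y + sumL f (y # zs)"
| "sumL f _ = 0"

lemma sumL_nth: "sumL f xs = (\<Sum>i<length xs - 1. f (xs!i) (xs!Suc i))"
proof (induction xs rule: induct_list012)
  case (3 x y zs)
  then show ?case by (simp add: sum.lessThan_Suc_shift del: sum.lessThan_Suc)
qed auto

lemma sumL_snoc: "ys \<noteq> [] \<Longrightarrow> sumL f (ys @ [y]) = sumL f ys + f (last ys) y"
  by (induction ys rule: induct_list012) auto

lemma sumL_app: "c \<noteq> [] \<Longrightarrow> ys \<noteq> [] \<Longrightarrow> last c = hd ys \<Longrightarrow>
   sumL f (c @ tl ys) = sumL f c + sumL f ys"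
proof (induction c rule: induct_list012)
  case (3 x y zs) then show ?case by auto
next
  case (2 x) then show ?case by (cases ys; cases "tl ys") auto
qed auto

lemma sumL_tri: assumes "\<And>x y z. f x z \<le> f x y + f y z" "\<And>x. f x x = 0"
  shows "ys \<noteq> [] \<Longrightarrow> f (hd ys) (last ys) \<le> sumL f ys"
proof (induction ys rule: induct_list012)
  case (3 x y zs)
  then show ?case using assms(1)[where x=x and y=y and z="last (y#zs)"] by auto
qed (use assms in auto)

lemma sumL_Cons: "ys \<noteq> [] \<Longrightarrow> sumL f (x # ys) = f x (hd ys) + sumL f ys"
  by (cases ys) auto

lemma sumL_remdups_adj: assumes "\<And>x. f x x = 0"
  shows "sumL f (remdups_adj xs) = sumL f xs"
proof (induction xs rule: induct_list012)
  case (3 x y zs)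
  then show ?case using assms by (cases "x = y") (auto simp: sumL_Cons)
qed auto

lemma dH_bdd: assumes "compact A" "B \<noteq> {}"
  shows "bdd_above ((\<lambda>a. infdist a B) ` A)"
proof -
  have "continuous_on A (\<lambda>a. infdist a B)" by (intro continuous_intros)
  then have "compact ((\<lambda>a. infdist a B) ` A)" using assms compact_continuous_image by blast
  then show ?thesis by (simp add: bounded_imp_bdd_above compact_imp_bounded)
qed

lemma dH_tri: fixes A B C :: "'a::metric_space set"
  assumes "A \<noteq> {}" "B \<noteq> {}" "C \<noteq> {}" "compact A" "compact B" "compact C"
  shows "(SUP a\<in>A. infdist a C) \<le> (SUP a\<in>A. infdist a B) + (SUP b\<in>B. infdist b C)"
proof (rule cSUP_least)
  fix a assume a: "a \<in> A"
  have "continuous_on B (dist a)" by (intro continuous_intros)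
  then obtain b where b0: "b \<in> B" "\<forall>y\<in>B. dist a b \<le> dist a y"
    using continuous_attains_inf[OF assms(5) assms(2), of "dist a"] by blast
  have "infdist a B = dist a b"
  proof (rule antisym)
    show "infdist a B \<le> dist a b" using b0(1) by (rule infdist_le)
    show "dist a b \<le> infdist a B" unfolding infdist_def using b0 assms(2)
      by (simp add: cINF_greatest)
  qed
  note b = b0(1) this
  have "infdist a C \<le> infdist b C + dist a b" by (rule infdist_triangle)
  also have "dist a b \<le> (SUP a\<in>A. infdist a B)"
    using b a cSUP_upper[OF a dH_bdd[OF assms(4) assms(2)]] by simp
  also have "infdist b C \<le> (SUP b\<in>B. infdist b C)"
    using cSUP_upper[OF b(1) dH_bdd[OF assms(5) assms(3)]] .
  finally show "infdist a C \<le> (SUP a\<in>A. infdist a B) + (SUP b\<in>B. infdist b C)" by simp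
qed (use assms in auto)

lemma hd_alt: "B \<noteq> {} \<Longrightarrow> hausdorff_dist A B = max (SUP a\<in>A. infdist a B) (SUP b\<in>B. infdist b A)"
  if "A \<noteq> {}"
  using that unfolding hausdorff_dist_def infdist_def by (simp add: dist_commute)

lemma hd_tri: fixes A B C :: "'a::metric_space set"
  assumes "A \<noteq> {}" "B \<noteq> {}" "C \<noteq> {}" "compact A" "compact B" "compact C"
  shows "hausdorff_dist A C \<le> hausdorff_dist A B + hausdorff_dist B C"
  using dH_tri[OF assms] dH_tri[of C B A] assms
  by (simp add: hd_alt) linarith

lemma hd_self: fixes A :: "'a::metric_space set"
  assumes "A \<noteq> {}" shows "hausdorff_dist A A = 0"
  using assms by (simp add: hd_alt infdist_zero)

lemma hd_sym: "hausdorff_dist A B = hausdorff_dist B A"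
  unfolding hausdorff_dist_def by (simp add: dist_commute max.commute)

lemma sum_shift1: "(\<Sum>i\<in>{1..n}. g (i - 1) i) = (\<Sum>i<n. g i (Suc i) :: real)"
  by (induction n) (auto simp: atLeastAtMostSuc_conv)

lemma local_contr:
  fixes F :: "'a::metric_space \<Rightarrow> 'a set" and p :: "real \<Rightarrow> 'a"
  assumes "uniform_pointwise_contraction F \<beta>" "continuous_on {0..1} p" "c \<in> {0..1}"
  shows "\<exists>\<delta>>0. \<forall>y\<in>{0..1}. dist y c < \<delta> \<longrightarrow>
           hausdorff_dist (F (p c)) (F (p y)) \<le> \<beta> * dist (p c) (p y)"
proof -
  obtain N where N: "open N" "p c \<in> N" "\<forall>y\<in>N. hausdorff_dist (F (p c)) (F y) \<le> \<beta> * dist (p c) y"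
    using assms(1) unfolding uniform_pointwise_contraction_def by blast
  obtain e where e: "e > 0" "ball (p c) e \<subseteq> N" using N open_contains_ball by blast
  obtain d where d: "d > 0" "\<forall>y\<in>{0..1}. dist y c < d \<longrightarrow> dist (p y) (p c) < e"
    using assms(2) assms(3) e(1) unfolding continuous_on_iff by blast
  show ?thesis
  proof (intro exI[of _ d] conjI ballI impI)
    fix y assume "y \<in> {0..1::real}" "dist y c < d"
    then have "dist (p c) (p y) < e" using d by (auto simp: dist_commute)
    then have "p y \<in> N" using e by auto
    then show "hausdorff_dist (F (p c)) (F (p y)) \<le> \<beta> * dist (p c) (p y)" using N by blast
  qed (use d in auto)
qed

lemma chain:
  fixes F :: "'a::metric_space \<Rightarrow> 'a set" and p :: "real \<Rightarrow> 'a"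
  assumes "uniform_pointwise_contraction F \<beta>" "continuous_on {0..1} p"
    and a: "a \<in> {0..1}"
  shows "\<forall>b\<in>{a..1}. \<exists>ys. ys \<noteq> [] \<and> sorted ys \<and> hd ys = a \<and> last ys = b \<and> set ys \<subseteq> {a..b}
     \<and> sumL (\<lambda>x y. hausdorff_dist (F (p x)) (F (p y))) ys \<le> \<beta> * sumL (\<lambda>x y. dist (p x) (p y)) ys"
proof -
  define G where "G = (\<lambda>x y. hausdorff_dist (F (p x)) (F (p y)))"
  define D where "D = (\<lambda>x y. dist (p x) (p y))"
  define Ch where "Ch b \<longleftrightarrow> (\<exists>ys. ys \<noteq> [] \<and> sorted ys \<and> hd ys = a \<and> last ys = b \<and> set ys \<subseteq> {a..b}
     \<and> sumL G ys \<le> \<beta> * sumL D ys)" for b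
  have ext: "Ch y" if hx: "Ch x" "x \<le> y" "G x y \<le> \<beta> * D x y" for x y
  proof -
    from hx(1) obtain ys where ysc: "ys \<noteq> [] \<and> sorted ys \<and> hd ys = a \<and> last ys = x \<and> set ys \<subseteq> {a..x}
        \<and> sumL G ys \<le> \<beta> * sumL D ys" unfolding Ch_def by (rule exE)
    note ys = ysc[THEN conjunct1] ysc[THEN conjunct2, THEN conjunct1]
      ysc[THEN conjunct2, THEN conjunct2, THEN conjunct1]
      ysc[THEN conjunct2, THEN conjunct2, THEN conjunct2, THEN conjunct1]
      ysc[THEN conjunct2, THEN conjunct2, THEN conjunct2, THEN conjunct2, THEN conjunct1]
      ysc[THEN conjunct2, THEN conjunct2, THEN conjunct2, THEN conjunct2, THEN conjunct2]
    have h2: "sorted (ys @ [y])" using ys(2,5) hx(2) by (auto simp: sorted_append)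
    have h5: "set (ys @ [y]) \<subseteq> {a..y}"
    proof -
      have "a \<in> set ys" using ys(1,3) hd_in_set by metis
      then have "a \<le> x" using ys(5) by auto
      then show ?thesis using ys(5) hx(2) by auto
    qed
    have h6: "sumL G (ys @ [y]) \<le> \<beta> * sumL D (ys @ [y])"
      using ys(1,4,6) hx(3) by (simp add: sumL_snoc distrib_left)
    have h3: "hd (ys @ [y]) = a" "last (ys @ [y]) = y" "ys @ [y] \<noteq> []" using ys(1,3) by auto
    have "ys @ [y] \<noteq> [] \<and> sorted (ys @ [y]) \<and> hd (ys @ [y]) = a \<and> last (ys @ [y]) = y
       \<and> set (ys @ [y]) \<subseteq> {a..y} \<and> sumL G (ys @ [y]) \<le> \<beta> * sumL D (ys @ [y])"
      by (intro conjI h2 h3 h5 h6)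
    then show ?thesis unfolding Ch_def by (rule exI)
  qed
  have Gsym: "G x y = G y x" for x y unfolding G_def using hd_sym by metis
  have Dsym: "D x y = D y x" for x y unfolding D_def by (simp add: dist_commute)
  define S where "S = {b \<in> {a..1}. \<forall>b'\<in>{a..b}. Ch b'}"
  have Cha: "Ch a" unfolding Ch_def by (intro exI[of _ "[a]"]) auto
  have aS: "a \<in> S" unfolding S_def using a Cha by auto
  have bdd: "bdd_above S" unfolding S_def by (auto intro: bdd_aboveI[of _ 1])
  define c where "c = Sup S"
  have ac: "a \<le> c" unfolding c_def using aS bdd by (rule cSup_upper)
  have c1: "c \<le> 1" unfolding c_def using aS by (intro cSup_least) (auto simp: S_def)
  have below: "Ch b'" if hb: "a \<le> b'" "b' < c" for b'
  proof -
    obtain s where "s \<in> S" "b' < s" using hb(2) less_cSup_iff[OF _ bdd, of b'] aS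
      unfolding c_def by blast
    then show ?thesis using hb unfolding S_def by auto
  qed
  obtain \<delta> where d: "\<delta> > 0" "\<forall>y\<in>{0..1}. dist y c < \<delta> \<longrightarrow> G c y \<le> \<beta> * D c y"
    using local_contr[OF assms(1,2), of c] ac c1 a unfolding G_def D_def by auto
  have Chc: "Ch c"
  proof (cases "c = a")
    case True then show ?thesis using Cha by simp
  next
    case False
    define x where "x = max a (c - \<delta>/2)"
    have x: "a \<le> x" "x < c" "dist x c < \<delta>" "x \<in> {0..1}" using False ac d(1) a c1
      by (auto simp: x_def dist_real_def)
    have "G x c \<le> \<beta> * D x c" using d x Gsym Dsym by metis
    then show ?thesis by (rule ext[OF below[OF x(1,2)] less_imp_le[OF x(2)]])
  qed
  define e where "e = min 1 (c + \<delta>/2)"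
  have "e \<in> S" unfolding S_def
  proof (intro CollectI conjI ballI)
    show "e \<in> {a..1}" using ac c1 d(1) by (auto simp: e_def)
    fix b' assume b': "b' \<in> {a..e}"
    show "Ch b'"
    proof (cases "b' < c")
      case True then show ?thesis using below b' by auto
    next
      case False
      then have "b' \<in> {0..1}" "dist b' c < \<delta>" using b' d(1) ac a
        by (auto simp: e_def dist_real_def)
      then have Gc: "G c b' \<le> \<beta> * D c b'" using d by auto
      have "c \<le> b'" using False by simp
      then show ?thesis by (rule ext[OF Chc _ Gc])
    qed
  qed
  then have "e \<le> c" unfolding c_def using bdd by (rule cSup_upper)
  then have "c = 1" using d(1) c1 by (auto simp: e_def)
  have "\<forall>b\<in>{a..1}. Ch b"
  proof
    fix b assume "b \<in> {a..1::real}"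
    then have b: "a \<le> b" "b \<le> c" using \<open>c = 1\<close> by auto
    show "Ch b"
    proof (cases "b < c")
      case True then show ?thesis by (rule below[OF b(1)])
    next
      case False then have "b = c" using b(2) by simp
      then show ?thesis using Chc by simp
    qed
  qed
  then show ?thesis unfolding Ch_def G_def D_def .
qed

lemma refine:
  fixes F :: "'a::metric_space \<Rightarrow> 'a set" and p :: "real \<Rightarrow> 'a"
  assumes FF: "\<And>x. F x \<noteq> {} \<and> compact (F x)"
    and "uniform_pointwise_contraction F \<beta>" "continuous_on {0..1} p"
  shows "xs \<noteq> [] \<Longrightarrow> sorted xs \<Longrightarrow> set xs \<subseteq> {0..1} \<Longrightarrow>
    \<exists>ys. ys \<noteq> [] \<and> sorted ys \<and> hd ys = hd xs \<and> last ys = last xs \<and> set ys \<subseteq> {hd xs..last xs}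
     \<and> sumL (\<lambda>x y. hausdorff_dist (F (p x)) (F (p y))) xs \<le> \<beta> * sumL (\<lambda>x y. dist (p x) (p y)) ys"
proof (induction xs rule: induct_list012)
  case 1 then show ?case by simp
next
  case (2 x) then show ?case by (intro exI[of _ "[x]"]) auto
next
  case (3 x y zs)
  define G where "G = (\<lambda>x y. hausdorff_dist (F (p x)) (F (p y)))"
  define D where "D = (\<lambda>x y. dist (p x) (p y))"
  obtain ys' where ys': "ys' \<noteq> []" "sorted ys'" "hd ys' = y" "last ys' = last (y#zs)"
     "set ys' \<subseteq> {y..last (y#zs)}" "sumL G (y#zs) \<le> \<beta> * sumL D ys'"
    using 3 unfolding G_def D_def by auto
  have xy: "x \<le> y" "x \<in> {0..1}" "y \<in> {0..1}" using 3 by auto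
  obtain c where c: "c \<noteq> []" "sorted c" "hd c = x" "last c = y" "set c \<subseteq> {x..y}"
    "sumL G c \<le> \<beta> * sumL D c"
  proof -
    have "y \<in> {x..1}" using xy by auto
    then show ?thesis using that chain[OF assms(2,3) xy(2)] unfolding G_def D_def by blast
  qed
  have tri: "G u w \<le> G u v + G v w" for u v w
    unfolding G_def using hd_tri FF by metis
  have self: "G u u = 0" for u unfolding G_def using hd_self FF by metis
  have "G x y \<le> sumL G c" using sumL_tri[of G, OF tri self c(1)] c by simp
  have lastz: "last (y # zs) \<in> set (y#zs)" by simp
  then have ylast: "y \<le> last (y#zs)" using 3(4) by (auto simp: sorted_wrt_append)
  have ys'set: "set (tl ys') \<subseteq> {y..last (y#zs)}" using ys'(5) ys'(1) by (cases ys') auto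
  have "\<forall>u\<in>set c. \<forall>v\<in>set (tl ys'). u \<le> v" using c(5) ys'set by fastforce
  then have "sorted (c @ tl ys')" using c ys'(2) by (auto simp: sorted_append sorted_tl)
  moreover have "hd (c @ tl ys') = x" using c by simp
  moreover have "last (c @ tl ys') = last (x#y#zs)" using c ys' by (cases ys'; cases "tl ys'") auto
  moreover have "set (c @ tl ys') \<subseteq> {hd (x#y#zs)..last (x#y#zs)}"
  proof -
    have "set c \<subseteq> {x..last (y#zs)}" using c(5) ylast by auto
    moreover have "set (tl ys') \<subseteq> {x..last (y#zs)}" using ys'set xy(1) by auto
    ultimately show ?thesis by simp
  qed
  moreover have "sumL G (x#y#zs) \<le> \<beta> * sumL D (c @ tl ys')"
    using sumL_app[OF c(1) ys'(1), of D] c ys' \<open>G x y \<le> sumL G c\<close>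
    by (simp add: distrib_left)
  ultimately have "\<exists>ys. ys \<noteq> [] \<and> sorted ys \<and> hd ys = hd (x#y#zs) \<and> last ys = last (x#y#zs)
     \<and> set ys \<subseteq> {hd (x#y#zs)..last (x#y#zs)} \<and> sumL G (x#y#zs) \<le> \<beta> * sumL D ys"
    using c(1) by (intro exI[of _ "c @ tl ys'"]) simp
  then show ?case unfolding G_def D_def .
qed

lemma dist_bound:
  fixes p :: "real \<Rightarrow> 'a::metric_space"
  assumes "ys \<noteq> []" "sorted ys" "hd ys = 0" "last ys = 1"
  shows "ereal (sumL (\<lambda>x y. dist (p x) (p y)) ys) \<le> path_length p"
proof -
  define D where "D = (\<lambda>x y. dist (p x) (p y))"
  define zs where "zs = remdups_adj ys"
  have zs: "sorted zs" "hd zs = 0" "last zs = 1" "zs \<noteq> []" "sumL D zs = sumL D ys"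
    using assms by (auto simp: zs_def D_def sumL_remdups_adj)
  define n where "n = length zs - 1"
  have "length zs \<noteq> 1" using zs by (cases zs) auto
  then have n1: "n \<ge> 1" using zs(4) unfolding n_def by (cases zs) (auto simp: Suc_le_eq)
  have "(n, \<lambda>i. zs ! i) \<in> partitions01"
    unfolding partitions01_def
  proof (intro CollectI case_prodI conjI allI impI n1)
    show "zs ! 0 = 0" using zs by (simp add: hd_conv_nth)
    show "zs ! n = 1" using zs by (simp add: last_conv_nth n_def)
    fix i assume "i < n"
    then have "zs ! i \<le> zs ! Suc i" "zs ! i \<noteq> zs ! Suc i"
      using zs(1) remdups_adj_adjacent[of i ys] unfolding n_def zs_def
      by (auto intro: sorted_nth_mono)
    then show "zs ! i < zs ! Suc i" by simp
  qed
  then have "ereal (\<Sum>i\<in>{1..n}. D (zs ! (i - 1)) (zs ! i)) \<le> path_length p"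
    unfolding path_length_def variation_def D_def by (force intro: SUP_upper2)
  also have "(\<Sum>i\<in>{1..n}. D (zs ! (i - 1)) (zs ! i)) = (\<Sum>i<n. D (zs ! i) (zs ! Suc i))"
    using sum_shift1[of "\<lambda>i j. D (zs ! i) (zs ! j)" n] by simp
  also have "\<dots> = sumL D zs" by (simp add: sumL_nth n_def)
  finally show ?thesis using zs unfolding D_def by simp
qed

lemma mono_part: "(\<forall>i<n. t i < t (Suc i)) \<Longrightarrow> i \<le> j \<Longrightarrow> j \<le> n \<Longrightarrow> (t i :: real) \<le> t j"
proof (induction j)
  case (Suc j)
  then show ?case by (cases "i = Suc j") (auto simp: le_Suc_eq intro: order_trans[OF _ less_imp_le])
qed auto

theorem lemma13:
  fixes F :: "'a::metric_space \<Rightarrow> 'a set" and \<beta> :: real and p :: "real \<Rightarrow> 'a"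
  assumes "\<And>x. F x \<noteq> {} \<and> compact (F x)"
    and "uniform_pointwise_contraction F \<beta>"
    and "0 \<le> \<beta>" and "\<beta> < 1"
    and "continuous_on {0..1} p"
    and "path_length p < \<infinity>"
  shows "set_valued_path_length F p \<le> ereal \<beta> * path_length p
         \<and> ereal \<beta> * path_length p < \<infinity>"
proof -
  define G where "G = (\<lambda>x y. hausdorff_dist (F (p x)) (F (p y)))"
  define D where "D = (\<lambda>x y. dist (p x) (p y))"
  have "(1::nat, \<lambda>i. real i) \<in> partitions01" unfolding partitions01_def by auto
  then have "ereal (\<Sum>i\<in>{1..1::nat}. dist (p (real (i - 1))) (p (real i))) \<le> path_length p"
    unfolding path_length_def variation_def by (force intro: SUP_upper2)
  then have "0 \<le> path_length p" by (rule order_trans[rotated]) simp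
  then obtain L where L: "path_length p = ereal L" "0 \<le> L" using assms(6)
    by (cases "path_length p") auto
  have "set_valued_path_length F p \<le> ereal (\<beta> * L)"
    unfolding set_valued_path_length_def variation_def
  proof (rule SUP_least)
    fix nt assume "nt \<in> partitions01"
    then obtain n t where nt: "nt = (n, t)" "n \<ge> 1" "t 0 = 0" "t n = 1" "\<forall>i<n. t i < t (Suc i)"
      unfolding partitions01_def by auto
    define xs where "xs = map t [0..<Suc n]"
    have len: "length xs = Suc n" unfolding xs_def by simp
    have "sorted xs" unfolding sorted_iff_nth_mono xs_def
      using mono_part[OF nt(5)] by (auto simp del: upt_Suc)
    moreover have "set xs \<subseteq> {0..1}" unfolding xs_def
      using mono_part[OF nt(5), of 0] mono_part[OF nt(5), of _ n] nt(3,4)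
      by (auto simp del: upt_Suc)
    moreover have "xs \<noteq> []" unfolding xs_def by simp
    ultimately obtain ys where ys: "ys \<noteq> []" "sorted ys" "hd ys = hd xs" "last ys = last xs"
      "sumL G xs \<le> \<beta> * sumL D ys"
      using refine[OF assms(1,2,5)] unfolding G_def D_def by blast
    have "hd xs = 0" "last xs = 1" using nt(3,4) unfolding xs_def
      by (simp_all add: hd_map last_map del: upt_Suc)
    then have "ereal (sumL D ys) \<le> path_length p" using dist_bound[OF ys(1,2), of p] ys(3,4)
      unfolding D_def by simp
    then have "ereal (sumL D ys) \<le> ereal L" using L(1) by simp
    then have "sumL G xs \<le> \<beta> * L" using ys(5) assms(3)
      by (meson ereal_less_eq(3) mult_left_mono order_trans)
    moreover have "(\<Sum>i\<in>{1..n}. G (t (i - 1)) (t i)) = sumL G xs"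
    proof -
      have "(\<Sum>i\<in>{1..n}. G (t (i - 1)) (t i)) = (\<Sum>i<n. G (t i) (t (Suc i)))"
        using sum_shift1[of "\<lambda>i j. G (t i) (t j)" n] by simp
      also have "\<dots> = sumL G xs" unfolding sumL_nth len
        by (intro sum.cong) (auto simp: xs_def nth_map_upt simp del: upt_Suc)
      finally show ?thesis .
    qed
    ultimately show "ereal (\<Sum>i\<in>{1..fst nt}. hausdorff_dist (F (p (snd nt (i - 1)))) (F (p (snd nt i))))
        \<le> ereal (\<beta> * L)" using nt(1) unfolding G_def by simp
  qed
  then show ?thesis using L by simp
qed

end
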